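(* Let $\alpha>1$. For all $a,b>0$, \[\sup_{x\ge1}\left|x\left(F_\alpha(\tfrac xa)-F_\alpha(\tfrac xb)\right)\right|\le|a-b|\,G_\alpha,\qquad \sup_{x\ge1}\left|x\left(D_xF_\alpha(\tfrac xa)-D_xF_\alpha(\tfrac xb)\right)\right|\le|a-b|\,L_\alpha.\]
   Context: $F_\alpha(x)=\frac{\sin(\frac{2\pi}{1+\alpha})}{\pi}\int_0^x\frac{dy}{1+y^2-2y\cos(\frac{2\pi}{1+\alpha})}$, $K_\alpha(x)=xF_\alpha'(x)=\frac{\sin(\frac{2\pi}{1+\alpha})}\pi\frac{x}{1+x^2-2x\cos(\frac{2\pi}{1+\alpha})}$, $D_x=x\frac d{dx}$. $G_\alpha=\sup_{x\ge0}|F_\alpha'(x)|$ (equal to $\frac1\pi\sin\frac{2\pi}{1+\alpha}$ for $1<\alpha\le3$ and $\frac{1}{\pi\sin\frac{2\pi}{1+\alpha}}$ for $\alpha>3$), and $L_\alpha=\sup_{x\ge0}|K_\alpha'(x)|$. *)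

theory Defs
  imports "HOL-Analysis.Analysis"
begin

definition theta :: "real \<Rightarrow> real" where
  "theta \<alpha> = 2 * pi / (1 + \<alpha>)"

definition Fd :: "real \<Rightarrow> real \<Rightarrow> real" where
  "Fd \<alpha> y = sin (theta \<alpha>) / pi * (1 / (1 + y\<^sup>2 - 2 * y * cos (theta \<alpha>)))"

definition F :: "real \<Rightarrow> real \<Rightarrow> real" where
  "F \<alpha> x = integral {0..x} (\<lambda>y. Fd \<alpha> y)"

definition K :: "real \<Rightarrow> real \<Rightarrow> real" where
  "K \<alpha> x = sin (theta \<alpha>) / pi * (x / (1 + x\<^sup>2 - 2 * x * cos (theta \<alpha>)))"

definition G :: "real \<Rightarrow> real" where
  "G \<alpha> = (SUP x\<in>{0..}. \<bar>Fd \<alpha> x\<bar>)"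

definition L :: "real \<Rightarrow> real" where
  "L \<alpha> = (SUP x\<in>{0..}. \<bar>deriv (K \<alpha>) x\<bar>)"

end

theory Submission
  imports Defs
begin

lemma theta_props:
  assumes "\<alpha> > 1"
  shows "sin (theta \<alpha>) > 0" "\<bar>cos (theta \<alpha>)\<bar> < 1"
proof -
  have t: "0 < theta \<alpha>" "theta \<alpha> < pi"
    using assms pi_gt_zero by (auto simp: theta_def field_simps)
  show s: "sin (theta \<alpha>) > 0" using sin_gt_zero t by blast
  have "(sin (theta \<alpha>))\<^sup>2 + (cos (theta \<alpha>))\<^sup>2 = 1" by simp
  moreover have "(sin (theta \<alpha>))\<^sup>2 > 0" using s by simp
  ultimately have "(cos (theta \<alpha>))\<^sup>2 < 1" by linarith
  thus "\<bar>cos (theta \<alpha>)\<bar> < 1" by (simp add: abs_square_less_1)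
qed

lemma den_ge:
  assumes "\<alpha> > 1"
  shows "1 + y\<^sup>2 - 2 * y * cos (theta \<alpha>) \<ge> (sin (theta \<alpha>))\<^sup>2"
proof -
  have "(sin (theta \<alpha>))\<^sup>2 = 1 - (cos (theta \<alpha>))\<^sup>2" by (rule sin_squared_eq)
  moreover have "(y - cos (theta \<alpha>))\<^sup>2 \<ge> 0" by simp
  ultimately show ?thesis unfolding power2_diff by linarith
qed

lemma den_pos:
  assumes "\<alpha> > 1"
  shows "1 + y\<^sup>2 - 2 * y * cos (theta \<alpha>) > 0"
proof -
  have "(sin (theta \<alpha>))\<^sup>2 > 0" using theta_props[OF assms] by simp
  thus ?thesis using den_ge[OF assms, of y] by linarith
qed

lemma den_ge2:
  assumes "\<alpha> > 1"
  shows "1 + y\<^sup>2 - 2 * y * cos (theta \<alpha>) \<ge> (1 + y\<^sup>2) * (1 - \<bar>cos (theta \<alpha>)\<bar>)"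
proof -
  have h0: "0 \<le> (\<bar>y\<bar> - 1)\<^sup>2" by simp
  have h1: "(\<bar>y\<bar> - 1)\<^sup>2 = y\<^sup>2 - 2 * \<bar>y\<bar> + 1" by (simp add: power2_diff)
  have h2: "\<bar>2 * y\<bar> = 2 * \<bar>y\<bar>" by simp
  have "\<bar>2 * y\<bar> \<le> 1 + y\<^sup>2" using h0 h1 h2 by linarith
  hence "\<bar>2 * y * cos (theta \<alpha>)\<bar> \<le> (1 + y\<^sup>2) * \<bar>cos (theta \<alpha>)\<bar>"
    by (simp add: abs_mult mult_right_mono)
  thus ?thesis by (simp add: algebra_simps)
qed

lemma Fd_bound:
  assumes "\<alpha> > 1"
  shows "\<bar>Fd \<alpha> y\<bar> \<le> sin (theta \<alpha>) / pi / (sin (theta \<alpha>))\<^sup>2"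
proof -
  have s: "sin (theta \<alpha>) > 0" using theta_props[OF assms] by auto
  have d: "1 + y\<^sup>2 - 2 * y * cos (theta \<alpha>) \<ge> (sin (theta \<alpha>))\<^sup>2" using den_ge[OF assms] .
  have "\<bar>Fd \<alpha> y\<bar> = sin (theta \<alpha>) / pi * (1 / (1 + y\<^sup>2 - 2 * y * cos (theta \<alpha>)))"
    unfolding Fd_def using s den_pos[OF assms, of y] by (simp add: abs_mult)
  also have "\<dots> \<le> sin (theta \<alpha>) / pi * (1 / (sin (theta \<alpha>))\<^sup>2)"
    using s d den_pos[OF assms, of y] by (intro mult_left_mono divide_left_mono) auto
  finally show ?thesis by simp
qed

lemma bdd_G: "\<alpha> > 1 \<Longrightarrow> bdd_above ((\<lambda>x. \<bar>Fd \<alpha> x\<bar>) ` {0..})"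
  using Fd_bound by (intro bdd_aboveI2) blast

lemma Fd_le_G: "\<alpha> > 1 \<Longrightarrow> y \<ge> 0 \<Longrightarrow> \<bar>Fd \<alpha> y\<bar> \<le> G \<alpha>"
  unfolding G_def by (rule cSUP_upper) (auto intro: bdd_G)

definition Kd :: "real \<Rightarrow> real \<Rightarrow> real" where
  "Kd \<alpha> y = sin (theta \<alpha>) / pi * ((1 - y\<^sup>2) / (1 + y\<^sup>2 - 2 * y * cos (theta \<alpha>))\<^sup>2)"

lemma K_deriv:
  assumes "\<alpha> > 1"
  shows "(K \<alpha> has_real_derivative Kd \<alpha> y) (at y)"
proof -
  have p: "1 + y\<^sup>2 - 2 * y * cos (theta \<alpha>) \<noteq> 0" using den_pos[OF assms, of y] by simp
  show ?thesis
  proof -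
    define c where "c = cos (theta \<alpha>)"
    have p': "1 + y\<^sup>2 - 2 * y * c \<noteq> 0" using p by (simp add: c_def)
    have "((\<lambda>x. 1 + x\<^sup>2 - 2 * x * c) has_real_derivative (2 * y - 2 * c)) (at y)"
      by (auto intro!: derivative_eq_intros)
    from DERIV_quotient[OF DERIV_ident this p']
    have DQ: "((\<lambda>x. x / (1 + x\<^sup>2 - 2 * x * c)) has_real_derivative
       ((1 * (1 + y\<^sup>2 - 2 * y * c) - (2 * y - 2 * c) * y) / (1 + y\<^sup>2 - 2 * y * c) ^ Suc (Suc 0))) (at y)" .
    have e1: "(1 * (1 + y\<^sup>2 - 2 * y * c) - (2 * y - 2 * c) * y) = 1 - y\<^sup>2"
      by (simp add: algebra_simps power2_eq_square)
    have e2: "(1 + y\<^sup>2 - 2 * y * c) ^ Suc (Suc 0) = (1 + y\<^sup>2 - 2 * y * c)\<^sup>2"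
      by (simp add: power2_eq_square)
    have "((\<lambda>x. x / (1 + x\<^sup>2 - 2 * x * c)) has_real_derivative
       ((1 - y\<^sup>2) / (1 + y\<^sup>2 - 2 * y * c)\<^sup>2)) (at y)" using DQ unfolding e1 e2 .
    from DERIV_cmult[OF this, of "sin (theta \<alpha>) / pi"] show ?thesis
      unfolding K_def[abs_def] Kd_def c_def .
  qed
qed

lemma Kd_bound:
  assumes "\<alpha> > 1"
  shows "\<bar>Kd \<alpha> y\<bar> \<le> sin (theta \<alpha>) / pi / ((sin (theta \<alpha>))\<^sup>2 * (1 - \<bar>cos (theta \<alpha>)\<bar>))"
proof -
  define D where "D = 1 + y\<^sup>2 - 2 * y * cos (theta \<alpha>)"
  define s where "s = sin (theta \<alpha>)"
  define k where "k = \<bar>cos (theta \<alpha>)\<bar>"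
  have s: "s > 0" "k < 1" using theta_props[OF assms] by (auto simp: s_def k_def)
  have D1: "D \<ge> s\<^sup>2" using den_ge[OF assms] by (simp add: D_def s_def)
  have D2: "D \<ge> (1 + y\<^sup>2) * (1 - k)" using den_ge2[OF assms] by (simp add: D_def k_def)
  have "s\<^sup>2 > 0" using s by simp
  hence Dp: "D > 0" using D1 by linarith
  have "\<bar>1 - y\<^sup>2\<bar> \<le> 1 + y\<^sup>2" using zero_le_power2[of y] by (simp add: abs_le_iff)
  have D0: "D \<ge> 0" using Dp by simp
  have "D\<^sup>2 \<ge> s\<^sup>2 * ((1 + y\<^sup>2) * (1 - k))"
    unfolding power2_eq_square[of D] using D1 D2 s D0
    by (intro mult_mono) auto
  have ab: "\<bar>1 - y\<^sup>2\<bar> \<le> 1 + y\<^sup>2" using zero_le_power2[of y] by (simp add: abs_le_iff)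
  have pp: "0 < s\<^sup>2 * ((1 + y\<^sup>2) * (1 - k))" using s
    by (intro mult_pos_pos) (auto simp: add_pos_nonneg)
  have "\<bar>1 - y\<^sup>2\<bar> / D\<^sup>2 \<le> (1 + y\<^sup>2) / (s\<^sup>2 * ((1 + y\<^sup>2) * (1 - k)))"
    by (rule frac_le) (use ab pp \<open>D\<^sup>2 \<ge> _\<close> in auto)
  also have "\<dots> = 1 / (s\<^sup>2 * (1 - k))"
  proof -
    have y1: "1 + y\<^sup>2 \<noteq> 0" using zero_le_power2[of y] by linarith
    have k1: "k \<noteq> 1" using s by simp
    have "s\<^sup>2 * ((1 + y\<^sup>2) * (1 - k)) = (1 + y\<^sup>2) * (s\<^sup>2 * (1 - k))" by (simp add: ac_simps)
    thus ?thesis using nonzero_mult_divide_mult_cancel_left[OF y1, of 1 "s\<^sup>2 * (1 - k)"] by simp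
  qed
  finally have *: "\<bar>1 - y\<^sup>2\<bar> / D\<^sup>2 \<le> 1 / (s\<^sup>2 * (1 - k))" .
  have "\<bar>Kd \<alpha> y\<bar> = s / pi * (\<bar>1 - y\<^sup>2\<bar> / D\<^sup>2)"
    unfolding Kd_def D_def[symmetric] s_def[symmetric] using s by (simp add: abs_mult)
  also have "\<dots> \<le> s / pi * (1 / (s\<^sup>2 * (1 - k)))"
    using * s by (intro mult_left_mono) auto
  finally show ?thesis by (simp add: s_def k_def)
qed

lemma deriv_K: "\<alpha> > 1 \<Longrightarrow> deriv (K \<alpha>) y = Kd \<alpha> y"
  using K_deriv DERIV_imp_deriv by blast

lemma Kd_le_L: "\<alpha> > 1 \<Longrightarrow> y \<ge> 0 \<Longrightarrow> \<bar>Kd \<alpha> y\<bar> \<le> L \<alpha>"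
  unfolding L_def
  apply (subst deriv_K[symmetric], assumption)
  apply (rule cSUP_upper)
   apply simp
  apply (rule bdd_aboveI2)
  apply (subst deriv_K, assumption)
  apply (rule Kd_bound, assumption)
  done


lemma Fd_scaled:
  assumes "\<alpha> > 1" "x > 0" "s > 0"
  shows "Fd \<alpha> (s / x) = sin (theta \<alpha>) / pi * (x\<^sup>2 / (x\<^sup>2 + s\<^sup>2 - 2 * s * x * cos (theta \<alpha>)))"
proof -
  define c where "c = cos (theta \<alpha>)"
  have "1 + (s/x)\<^sup>2 - 2 * (s/x) * c = (x\<^sup>2 + s\<^sup>2 - 2 * s * x * c) / x\<^sup>2"
    using assms by (simp add: field_simps power2_eq_square)
  thus ?thesis using assms unfolding Fd_def c_def[symmetric] by simp
qed

lemma K_scaled: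
  assumes "\<alpha> > 1" "x > 0" "s > 0"
  shows "K \<alpha> (s / x) = sin (theta \<alpha>) / pi * (x * s / (x\<^sup>2 + s\<^sup>2 - 2 * s * x * cos (theta \<alpha>)))"
proof -
  define c where "c = cos (theta \<alpha>)"
  have "1 + (s/x)\<^sup>2 - 2 * (s/x) * c = (x\<^sup>2 + s\<^sup>2 - 2 * s * x * c) / x\<^sup>2"
    using assms by (simp add: field_simps power2_eq_square)
  hence "s / x / (1 + (s/x)\<^sup>2 - 2 * (s/x) * c) = s / x * (x\<^sup>2 / (x\<^sup>2 + s\<^sup>2 - 2 * s * x * c))"
    by simp
  also have "\<dots> = x * s / (x\<^sup>2 + s\<^sup>2 - 2 * s * x * c)"
    using assms by (simp add: power2_eq_square)
  finally show ?thesis unfolding K_def c_def[symmetric] by simp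
qed

lemma K_sym:
  assumes "\<alpha> > 1" "x > 0" "s > 0"
  shows "K \<alpha> (x / s) = K \<alpha> (s / x)"
  using K_scaled[OF assms] K_scaled[OF assms(1,3,2)]
  by (simp add: algebra_simps)

lemma Fd_sym:
  assumes "\<alpha> > 1" "x > 0" "s > 0"
  shows "x * (Fd \<alpha> (x / s) * (- x / s\<^sup>2)) = - Fd \<alpha> (s / x)"
proof -
  have "x * (Fd \<alpha> (x / s) * (- x / s\<^sup>2)) = - (sin (theta \<alpha>) / pi * (s\<^sup>2 / (s\<^sup>2 + x\<^sup>2 - 2 * x * s * cos (theta \<alpha>))) * (x\<^sup>2 / s\<^sup>2))"
    using Fd_scaled[OF assms(1,3,2)] by (simp add: power2_eq_square)
  also have "\<dots> = - (sin (theta \<alpha>) / pi * (x\<^sup>2 / (x\<^sup>2 + s\<^sup>2 - 2 * s * x * cos (theta \<alpha>))))"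
    using assms by (simp add: algebra_simps)
  finally show ?thesis using Fd_scaled[OF assms] by simp
qed

lemma F_deriv:
  assumes "\<alpha> > 1" "u > 0"
  shows "(F \<alpha> has_real_derivative Fd \<alpha> u) (at u)"
proof -
  have "continuous_on {0..u+1} (Fd \<alpha>)"
    unfolding Fd_def[abs_def] using den_pos[OF assms(1)]
    by (intro continuous_intros) (auto simp: less_imp_neq[symmetric])
  from integral_has_real_derivative[OF this, of u] assms
  have "(F \<alpha> has_real_derivative Fd \<alpha> u) (at u within {0..u+1})"
    unfolding F_def[abs_def] by simp
  moreover have "at u within {0..u+1} = at u"
    using assms by (intro at_within_interior) auto
  ultimately show ?thesis by simp
qed

lemma lip_aux:
  fixes h h' :: "real \<Rightarrow> real"
  assumes "\<And>s. s > 0 \<Longrightarrow> (h has_real_derivative h' s) (at s)"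
      "\<And>s. s > 0 \<Longrightarrow> \<bar>h' s\<bar> \<le> M" "a > 0" "a < b"
  shows "\<bar>h a - h b\<bar> \<le> \<bar>a - b\<bar> * M"
proof -
  obtain z where z: "a < z" "z < b" "h b - h a = (b - a) * h' z"
    using MVT2[OF assms(4), of h h'] assms(1,3) by force
  have "h a - h b = (a - b) * h' z" using z(3) by (simp add: algebra_simps)
  hence "\<bar>h a - h b\<bar> = \<bar>a - b\<bar> * \<bar>h' z\<bar>" by (simp add: abs_mult)
  also have "\<dots> \<le> \<bar>a - b\<bar> * M" using assms(2)[of z] z assms(3) by (intro mult_left_mono) auto
  finally show ?thesis .
qed

lemma lip:
  fixes h h' :: "real \<Rightarrow> real"
  assumes "\<And>s. s > 0 \<Longrightarrow> (h has_real_derivative h' s) (at s)"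
      "\<And>s. s > 0 \<Longrightarrow> \<bar>h' s\<bar> \<le> M" "a > 0" "b > 0"
  shows "\<bar>h a - h b\<bar> \<le> \<bar>a - b\<bar> * M"
proof (cases a b rule: linorder_cases)
  case less thus ?thesis using lip_aux[OF assms(1,2)] assms by blast
next
  case equal
  have "0 \<le> M" using assms(2)[OF assms(3)] by linarith
  thus ?thesis using equal by simp
next
  case greater thus ?thesis using lip_aux[OF assms(1,2), of b a] assms
    by (simp add: abs_minus_commute)
qed

theorem lemma5p4:
  fixes \<alpha> a b :: real
  assumes "\<alpha> > 1" and "a > 0" and "b > 0"
  shows "(\<forall>x\<ge>1. \<bar>x * (F \<alpha> (x / a) - F \<alpha> (x / b))\<bar> \<le> \<bar>a - b\<bar> * G \<alpha>)
       \<and> (\<forall>x\<ge>1. \<bar>x * (K \<alpha> (x / a) - K \<alpha> (x / b))\<bar> \<le> \<bar>a - b\<bar> * L \<alpha>)"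
proof safe
  fix x :: real assume x1: "x \<ge> 1"
  hence x: "x > 0" by simp
  have "\<bar>x * F \<alpha> (x / a) - x * F \<alpha> (x / b)\<bar> \<le> \<bar>a - b\<bar> * G \<alpha>"
  proof (rule lip[where h = "\<lambda>s. x * F \<alpha> (x / s)" and h' = "\<lambda>s. - Fd \<alpha> (s / x)"])
    fix s :: real assume s: "s > 0"
    have d1: "((\<lambda>s. x / s) has_real_derivative - x / s\<^sup>2) (at s)"
      using s by (auto intro!: derivative_eq_intros simp: power2_eq_square field_simps)
    have "((\<lambda>s. x * F \<alpha> (x / s)) has_real_derivative x * (Fd \<alpha> (x / s) * (- x / s\<^sup>2))) (at s)"
      by (intro DERIV_cmult DERIV_chain2[OF F_deriv d1]) (use assms x s in auto)
    thus "((\<lambda>s. x * F \<alpha> (x / s)) has_real_derivative - Fd \<alpha> (s / x)) (at s)"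
      using Fd_sym[OF assms(1) x s] by simp
  next
    fix s :: real assume s: "s > 0"
    show "\<bar>- Fd \<alpha> (s / x)\<bar> \<le> G \<alpha>" using Fd_le_G[OF assms(1), of "s/x"] s x by simp
  qed (use assms in auto)
  thus "\<bar>x * (F \<alpha> (x / a) - F \<alpha> (x / b))\<bar> \<le> \<bar>a - b\<bar> * G \<alpha>"
    by (simp add: right_diff_distrib)
next
  fix x :: real assume x1: "x \<ge> 1"
  hence x: "x > 0" by simp
  have "\<bar>x * K \<alpha> (a / x) - x * K \<alpha> (b / x)\<bar> \<le> \<bar>a - b\<bar> * L \<alpha>"
  proof (rule lip[where h = "\<lambda>s. x * K \<alpha> (s / x)" and h' = "\<lambda>s. Kd \<alpha> (s / x)"])
    fix s :: real assume s: "s > 0"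
    have d1: "((\<lambda>s. s / x) has_real_derivative 1 / x) (at s)"
      using x by (auto intro!: derivative_eq_intros)
    have "((\<lambda>s. x * K \<alpha> (s / x)) has_real_derivative x * (Kd \<alpha> (s / x) * (1 / x))) (at s)"
      by (intro DERIV_cmult DERIV_chain2[OF K_deriv d1]) (use assms in auto)
    thus "((\<lambda>s. x * K \<alpha> (s / x)) has_real_derivative Kd \<alpha> (s / x)) (at s)"
      using x by simp
  next
    fix s :: real assume s: "s > 0"
    show "\<bar>Kd \<alpha> (s / x)\<bar> \<le> L \<alpha>" using Kd_le_L[OF assms(1), of "s/x"] s x by simp
  qed (use assms in auto)
  thus "\<bar>x * (K \<alpha> (x / a) - K \<alpha> (x / b))\<bar> \<le> \<bar>a - b\<bar> * L \<alpha>"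
    using K_sym[OF assms(1) x assms(2)] K_sym[OF assms(1) x assms(3)]
    by (simp add: right_diff_distrib)
qed

end
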